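(* Let $\mathbb{F}$ be a field of characteristic $2$, $V$ an $n$-dimensional $\mathbb{F}$-vector space and $b$ a non-degenerate symmetric bilinear form on $V$ with attached quadratic form $Q: x\mapsto b(x,x)$. Assume that $\operatorname{Ker} Q$ is totally $b$-singular, and set $\nu := \dim \operatorname{Ker} Q$. Let $\mathcal{V}$ be a linear subspace of $\mathcal{S}_b$ (respectively, of $\mathcal{A}_b$) all of whose elements are nilpotent. Then $\dim \mathcal{V} \le \nu(n-\nu)$ (respectively, $\dim \mathcal{V} \le \nu(n-\nu-1)$).
   Context: $\operatorname{Ker} Q = \{x\in V : Q(x)=0\}$, a linear subspace in characteristic $2$. A subspace $X$ is totally $b$-singular if $b(x,y)=0$ for all $x,y\in X$. $\mathcal{S}_b$ (resp. $\mathcal{A}_b$) is the space of endomorphisms $u$ of $V$ for which $(x,y)\mapsto b(x,u(y))$ is symmetric (resp. alternating, i.e. vanishes on all pairs $(x,x)$). *)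

theory Defs
  imports "HOL-Analysis.Analysis" "HOL-Library.Function_Algebras"
begin

text \<open>The space V is the coordinate space 'a^'n over a field 'a, of dimension n = CARD('n).
  Endomorphisms of V are (F-linear) functions V => V; the space of all functions V => V is
  an F-vector space with the pointwise scalar multiplication endo_scale.\<close>

definition endo_scale :: "'a::field \<Rightarrow> ('a^'n \<Rightarrow> 'a^'n) \<Rightarrow> ('a^'n \<Rightarrow> 'a^'n)" where
  "endo_scale c f = (\<lambda>x. c *s f x)"

definition is_endo :: "('a::field^'n \<Rightarrow> 'a^'n) \<Rightarrow> bool" where
  "is_endo u \<longleftrightarrow> Vector_Spaces.linear (*s) (*s) u"

definition bilinear_form :: "('a::field^'n \<Rightarrow> 'a^'n \<Rightarrow> 'a) \<Rightarrow> bool" where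
  "bilinear_form b \<longleftrightarrow>
     (\<forall>x. Vector_Spaces.linear (*s) (*) (b x)) \<and> (\<forall>y. Vector_Spaces.linear (*s) (*) (\<lambda>x. b x y))"

definition symmetric_form :: "('v \<Rightarrow> 'v \<Rightarrow> 'a) \<Rightarrow> bool" where
  "symmetric_form b \<longleftrightarrow> (\<forall>x y. b x y = b y x)"

definition nondegenerate_form :: "('a::field^'n \<Rightarrow> 'a^'n \<Rightarrow> 'a) \<Rightarrow> bool" where
  "nondegenerate_form b \<longleftrightarrow> (\<forall>x. (\<forall>y. b x y = 0) \<longrightarrow> x = 0)"

text \<open>Ker Q for the quadratic form Q x = b x x.\<close>
definition KerQ :: "('a::field^'n \<Rightarrow> 'a^'n \<Rightarrow> 'a) \<Rightarrow> ('a^'n) set" where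
  "KerQ b = {x. b x x = 0}"

definition totally_singular :: "('v \<Rightarrow> 'v \<Rightarrow> 'a::zero) \<Rightarrow> 'v set \<Rightarrow> bool" where
  "totally_singular b X \<longleftrightarrow> (\<forall>x\<in>X. \<forall>y\<in>X. b x y = 0)"

text \<open>S_b: endomorphisms u with (x,y) |-> b(x,u(y)) symmetric;
  A_b: those with (x,y) |-> b(x,u(y)) alternating.\<close>
definition S_b :: "('a::field^'n \<Rightarrow> 'a^'n \<Rightarrow> 'a) \<Rightarrow> ('a^'n \<Rightarrow> 'a^'n) set" where
  "S_b b = {u. is_endo u \<and> (\<forall>x y. b x (u y) = b y (u x))}"

definition A_b :: "('a::field^'n \<Rightarrow> 'a^'n \<Rightarrow> 'a) \<Rightarrow> ('a^'n \<Rightarrow> 'a^'n) set" where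
  "A_b b = {u. is_endo u \<and> (\<forall>x. b x (u x) = 0)}"

definition nilpotent_endo :: "('a::field^'n \<Rightarrow> 'a^'n) \<Rightarrow> bool" where
  "nilpotent_endo u \<longleftrightarrow> (\<exists>k. (u ^^ k) = (\<lambda>_. 0))"

end

theory Submission
  imports Defs
begin


lemma endo_vs: "vector_space (endo_scale :: 'a::field \<Rightarrow> ('a^'n \<Rightarrow> 'a^'n) \<Rightarrow> _)"
  by unfold_locales (auto simp: endo_scale_def fun_eq_iff vector_add_ldistrib vector_sadd_rdistrib)

interpretation endo: vector_space "endo_scale :: 'a::field \<Rightarrow> ('a^'n \<Rightarrow> 'a^'n) \<Rightarrow> _"
  by (rule endo_vs)

interpretation ev: vector_space_pair "endo_scale :: 'a::field \<Rightarrow> ('a^'n \<Rightarrow> 'a^'n) \<Rightarrow> _" "(*s)"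
  by unfold_locales

interpretation ee: vector_space_pair "endo_scale :: 'a::field \<Rightarrow> ('a^'n \<Rightarrow> 'a^'n) \<Rightarrow> _" endo_scale
  by unfold_locales

context vector_space begin

definition dimle :: "'b set \<Rightarrow> nat \<Rightarrow> bool" where
  "dimle S k \<longleftrightarrow> (\<forall>B. B \<subseteq> S \<longrightarrow> local.independent B \<longrightarrow> finite B \<longrightarrow> card B \<le> k)"

lemma dimle_dim: "local.dimle (S::'b set) k \<Longrightarrow> local.dim S \<le> k"
proof -
  assume h: "local.dimle S k"
  obtain B where B: "B \<subseteq> S" "local.independent B" "S \<subseteq> local.span B" "card B = local.dim S"
    by (rule basis_exists)
  show ?thesis
  proof (cases "finite B")
    case True
    have "card B \<le> k" using h B(1) B(2) True unfolding dimle_def by blast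
    then show ?thesis using B(4) by simp
  next
    case False
    then show ?thesis using B by simp
  qed
qed

lemma dimle_mono: "local.dimle S k \<Longrightarrow> k \<le> k' \<Longrightarrow> local.dimle S k'"
  unfolding dimle_def by (meson order_trans)

lemma dimle_subset: "local.dimle S k \<Longrightarrow> T \<subseteq> S \<Longrightarrow> local.dimle T k"
  unfolding dimle_def by blast

lemma dimle_zero: "S \<subseteq> {0} \<Longrightarrow> local.dimle S 0"
  unfolding dimle_def
proof (intro allI impI)
  fix B assume "S \<subseteq> {0}" "B \<subseteq> S" "local.independent B"
  have "0 \<notin> B"
  proof
    assume "0 \<in> B"
    then have "local.dependent B" by (rule dependent_zero)
    then show False using \<open>local.independent B\<close> by simp
  qed
  then have "B = {}" using \<open>S \<subseteq> {0}\<close> \<open>B \<subseteq> S\<close> by blast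
  then show "card B \<le> 0" by simp
qed

lemma disjoint_span:
  assumes ind: "local.independent (A \<union> C)" and dis: "A \<inter> C = {}"
    and vA: "v \<in> local.span A" and vC: "v \<in> local.span C"
  shows "v = 0"
proof -
  from vA obtain ta r where ta: "finite ta" "ta \<subseteq> A" "v = (\<Sum>a\<in>ta. r a *s a)"
    by (auto simp: span_explicit)
  from vC obtain tc s where tc: "finite tc" "tc \<subseteq> C" "v = (\<Sum>a\<in>tc. s a *s a)"
    by (auto simp: span_explicit)
  define u where "u a = (if a \<in> ta then r a else - s a)" for a
  have dj: "ta \<inter> tc = {}" using ta tc dis by auto
  have "(\<Sum>a\<in>ta \<union> tc. u a *s a) = (\<Sum>a\<in>ta. u a *s a) + (\<Sum>a\<in>tc. u a *s a)"
    using ta tc dj by (simp add: sum.union_disjoint)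
  also have "(\<Sum>a\<in>ta. u a *s a) = v" using ta by (simp add: u_def)
  also have "(\<Sum>a\<in>tc. u a *s a) = (\<Sum>a\<in>tc. - (s a *s a))"
    using dj by (intro sum.cong) (auto simp: u_def)
  also have "\<dots> = - v" using tc by (simp add: sum_negf)
  finally have z: "(\<Sum>a\<in>ta \<union> tc. u a *s a) = 0" by simp
  have "\<forall>a\<in>ta. r a = 0"
  proof
    fix a assume "a \<in> ta"
    have "u a = 0"
      by (rule independentD[OF ind _ _ z]) (use ta tc \<open>a \<in> ta\<close> in auto)
    then show "r a = 0" using \<open>a \<in> ta\<close> by (simp add: u_def)
  qed
  then show ?thesis using ta by simp
qed

end

context vector_space_pair begin

lemma rank_nullity_dimle:
  assumes lin: "Vector_Spaces.linear s1 s2 f"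
    and img: "vs2.dimle (f ` S) a"
    and ker: "vs1.dimle {x\<in>S. f x = 0} b"
    and S: "vs1.subspace S"
  shows "vs1.dimle S (a + b)"
  unfolding vs1.dimle_def
proof (intro allI impI)
  fix B assume BS: "B \<subseteq> S" and indB: "vs1.independent B" and finB: "finite B"
  define K0 where "K0 = vs1.span B \<inter> {x. f x = 0}"
  obtain B0 where B0: "B0 \<subseteq> K0" "vs1.independent B0" "K0 \<subseteq> vs1.span B0"
    by (rule vs1.basis_exists)
  have B0sp: "B0 \<subseteq> vs1.span B" using B0(1) unfolding K0_def by blast
  have finB0: "finite B0" using vs1.independent_span_bound[OF finB B0(2) B0sp] by simp
  obtain B1 where B1: "B0 \<subseteq> B1" "B1 \<subseteq> vs1.span B" "vs1.independent B1" "vs1.span B \<subseteq> vs1.span B1"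
    by (rule vs1.maximal_independent_subset_extend[OF B0sp B0(2)])
  have finB1: "finite B1" and cB1: "card B1 \<le> card B"
    using vs1.independent_span_bound[OF finB B1(3) B1(2)] by simp_all
  have spaneq: "vs1.span B1 = vs1.span B"
    using B1(4) vs1.span_minimal[OF B1(2) vs1.subspace_span] by blast
  have "card B = card B1"
    using vs1.dim_eq_card[OF spaneq B1(3)] vs1.dim_eq_card[OF refl indB] by simp
  define C where "C = B1 - B0"
  have B0C: "B0 \<union> C = B1" using B1(1) C_def by blast
  have dj: "B0 \<inter> C = {}" using C_def by blast
  have injC: "inj_on f (vs1.span C)"
    unfolding linear_inj_on_iff_eq_0[OF lin vs1.subspace_span]
  proof (intro ballI impI)
    fix v assume vC: "v \<in> vs1.span C" and fv: "f v = 0"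
    have "C \<subseteq> B1" using C_def by blast
    then have "v \<in> vs1.span B1" using vC vs1.span_mono by blast
    then have "v \<in> vs1.span B" using spaneq by simp
    then have vB0: "v \<in> vs1.span B0" using fv B0(3) K0_def by blast
    have "vs1.independent (B0 \<union> C)" using B1(3) B0C by simp
    from vs1.disjoint_span[OF this dj vB0 vC] show "v = 0" .
  qed
  have indC: "vs1.independent C" using vs1.independent_mono[OF B1(3)] C_def by blast
  have indfC: "vs2.independent (f ` C)"
    by (rule linear_independent_injective_image[OF lin indC injC])
  have cardfC: "card (f ` C) = card C"
    by (rule card_image[OF inj_on_subset[OF injC vs1.span_superset]])
  have spS: "vs1.span B \<subseteq> S" using BS S by (simp add: vs1.span_minimal)
  have "C \<subseteq> vs1.span B" using B1(2) C_def by blast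
  then have fCS: "f ` C \<subseteq> f ` S" using spS by blast
  have finfC: "finite (f ` C)" using finB1 C_def by simp
  have c1: "card C \<le> a"
    using img fCS indfC finfC cardfC unfolding vs2.dimle_def by auto
  have "B0 \<subseteq> {x\<in>S. f x = 0}"
    using B0(1) K0_def spS by blast
  then have c2: "card B0 \<le> b" using ker B0(2) finB0 unfolding vs1.dimle_def by blast
  have "card B1 = card C + card B0"
    using B1(1) finB1 C_def finB0 card_Diff_subset[of B0 B1] card_mono[of B1 B0] by simp
  then show "card B \<le> a + b" using c1 c2 \<open>card B = card B1\<close> by simp
qed

end



context finite_dimensional_vector_space begin
lemma dimle_dim_fd: "S \<subseteq> T \<Longrightarrow> local.dimle S (local.dim T)"
  unfolding dimle_def
proof (intro allI impI)
  fix B assume "S \<subseteq> T" "B \<subseteq> S" "local.independent B"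
  then show "card B \<le> local.dim T" using independent_card_le_dim[of B T] by blast
qed
end

lemma endo_add: "is_endo u \<Longrightarrow> u (x + y) = u x + u y"
  unfolding is_endo_def by (rule vec.linear_add)
lemma endo_scale_app: "is_endo u \<Longrightarrow> u (c *s x) = c *s u x"
  unfolding is_endo_def by (rule vec.linear_scale)
lemma endo_zero: "is_endo u \<Longrightarrow> u 0 = 0"
  unfolding is_endo_def by (rule vec.linear_0)
lemma endo_diff: "is_endo u \<Longrightarrow> u (x - y) = u x - u y"
  unfolding is_endo_def by (rule vec.linear_diff)

lemma bil_lin2: "bilinear_form b \<Longrightarrow> Vector_Spaces.linear (*s) (*) (b x)"
  unfolding bilinear_form_def by blast
lemma bil_lin1: "bilinear_form b \<Longrightarrow> Vector_Spaces.linear (*s) (*) (\<lambda>x. b x y)"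
  unfolding bilinear_form_def by blast

lemma bil_add2: "bilinear_form b \<Longrightarrow> b x (y + z) = b x y + b x z"
  using bil_lin2[of b x] unfolding Vector_Spaces.linear_iff by blast
lemma bil_scale2: "bilinear_form b \<Longrightarrow> b x (c *s y) = c * b x y"
  using bil_lin2[of b x] unfolding Vector_Spaces.linear_iff by blast
lemma bil_add1: "bilinear_form b \<Longrightarrow> b (x + y) z = b x z + b y z"
  using bil_lin1[of b z] unfolding Vector_Spaces.linear_iff by blast
lemma bil_scale1: "bilinear_form b \<Longrightarrow> b (c *s x) y = c * b x y"
  using bil_lin1[of b y] unfolding Vector_Spaces.linear_iff by blast
lemma bil_zero2: "bilinear_form b \<Longrightarrow> b x 0 = 0"
  using bil_scale2[of b x 0 0] by simp
lemma bil_zero1: "bilinear_form b \<Longrightarrow> b 0 y = 0"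
  using bil_scale1[of b 0 0 y] by simp
lemma bil_sum1: "bilinear_form b \<Longrightarrow> b (\<Sum>i\<in>I. f i) y = (\<Sum>i\<in>I. b (f i) y)"
  by (induction I rule: infinite_finite_induct) (auto simp: bil_zero1 bil_add1)
lemma bil_sum2: "bilinear_form b \<Longrightarrow> b y (\<Sum>i\<in>I. f i) = (\<Sum>i\<in>I. b y (f i))"
  by (induction I rule: infinite_finite_induct) (auto simp: bil_zero2 bil_add2)
lemma bil_neg2: "bilinear_form b \<Longrightarrow> b x (- y) = - b x y"
  using bil_scale2[of b x "-1" y] by simp
lemma bil_diff2: "bilinear_form b \<Longrightarrow> b x (y - z) = b x y - b x z"
  using bil_add2[of b x y "-z"] bil_neg2[of b x z] by simp



interpretation vf: vector_space_pair "(*s) :: 'a::field \<Rightarrow> 'a^'n \<Rightarrow> 'a^'n" "(*) :: 'a \<Rightarrow> 'a \<Rightarrow> 'a"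
  by unfold_locales

lemma vec_dim_UNIV: "vec.dim (UNIV :: ('a::field^'n) set) = CARD('n)"
  using vec.dim_UNIV card_cart_basis by metis

definition orth :: "('a::field^'n \<Rightarrow> 'a^'n \<Rightarrow> 'a) \<Rightarrow> ('a^'n) set \<Rightarrow> ('a^'n) set" where
  "orth b A = {v. \<forall>w\<in>A. b v w = 0}"

lemma orth_subspace:
  assumes bil: "bilinear_form b" shows "vec.subspace (orth b A)"
  unfolding vec.subspace_def orth_def
  using bil_zero1[OF bil] bil_add1[OF bil] bil_scale1[OF bil] by auto

lemma bil_zero_on_span:
  assumes bil: "bilinear_form b" and h: "\<And>w. w \<in> W \<Longrightarrow> b v w = 0" and y: "y \<in> vec.span W"
  shows "b v y = 0"
  by (rule vf.linear_eq_0_on_span[OF bil_lin2[OF bil] h y])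

lemma lin_sum_basis:
  assumes bil: "bilinear_form b"
  shows "Vector_Spaces.linear (*s) (*s) (\<lambda>v. \<Sum>w\<in>W. b v w *s (w::'a::field^'n))"
  unfolding Vector_Spaces.linear_iff
proof (intro conjI allI)
  show "vector_space ((*s) :: 'a \<Rightarrow> 'a^'n \<Rightarrow> 'a^'n)" by unfold_locales
  show "vector_space ((*s) :: 'a \<Rightarrow> 'a^'n \<Rightarrow> 'a^'n)" by unfold_locales
  fix x y :: "'a^'n"
  show "(\<Sum>w\<in>W. b (x + y) w *s w) = (\<Sum>w\<in>W. b x w *s w) + (\<Sum>w\<in>W. b y w *s w)"
    by (simp add: bil_add1[OF bil] vector_sadd_rdistrib sum.distrib)
next
  fix c :: 'a and x :: "'a^'n"
  show "(\<Sum>w\<in>W. b (c *s x) w *s w) = c *s (\<Sum>w\<in>W. b x w *s w)"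
    by (simp add: bil_scale1[OF bil] vec.scale_sum_right)
qed

lemma orth_upper:
  fixes b :: "'a::field^'n::finite \<Rightarrow> 'a^'n \<Rightarrow> 'a"
  assumes bil: "bilinear_form b" and nondeg: "nondegenerate_form b"
    and A: "vec.subspace A"
  shows "vec.dim (orth b A) + vec.dim A \<le> CARD('n)"
proof -
  obtain BA where BA: "BA \<subseteq> A" "vec.independent BA" "A \<subseteq> vec.span BA" "card BA = vec.dim A"
    by (rule vec.basis_exists)
  obtain BV where BV: "BA \<subseteq> BV" "BV \<subseteq> (UNIV :: ('a^'n) set)" "vec.independent BV" "UNIV \<subseteq> vec.span BV"
    by (rule vec.maximal_independent_subset_extend[of BA UNIV, OF subset_UNIV BA(2)])
  have finBV: "finite BV" by (rule vec.finiteI_independent[OF BV(3)])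
  have cBV: "card BV = CARD('n)"
    using vec.dim_eq_card[of BV UNIV] BV(3,4) vec_dim_UNIV
    by (metis top.extremum_uniqueI vec.span_UNIV)
  define W where "W = BV - BA"
  have finW: "finite W" using finBV W_def by simp
  have indW: "vec.independent W" using vec.independent_mono[OF BV(3)] W_def by blast
  have cW: "card W = CARD('n) - vec.dim A"
    using W_def BV(1) finBV cBV BA(4) card_Diff_subset[of BA BV] finite_subset[of BA BV] by simp
  define h where "h v = (\<Sum>w\<in>W. b v w *s w)" for v
  have linh: "Vector_Spaces.linear (*s) (*s) h"
    unfolding h_def by (rule lin_sum_basis[OF bil])
  have img: "vec.dimle (h ` orth b A) (card W)"
  proof -
    have "h ` orth b A \<subseteq> vec.span W"
      unfolding h_def by (auto intro!: vec.span_sum vec.span_scale simp: vec.span_base)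
    then have "vec.dimle (h ` orth b A) (vec.dim (vec.span W))"
      by (rule vec.dimle_dim_fd)
    then show ?thesis using vec.dim_span_eq_card_independent[OF indW] by simp
  qed
  have ker: "vec.dimle {v \<in> orth b A. h v = 0} 0"
  proof (rule vec.dimle_zero, rule subsetI)
    fix v assume v: "v \<in> {v \<in> orth b A. h v = 0}"
    have "\<forall>w\<in>BV. b v w = 0"
    proof
      fix w assume w: "w \<in> BV"
      show "b v w = 0"
      proof (cases "w \<in> W")
        case True
        have "(\<Sum>w\<in>W. b v w *s w) = 0" using v h_def by simp
        from vec.independentD[OF indW finW subset_refl this True] show ?thesis .
      next
        case False
        then have "w \<in> A" using w W_def BA(1) by blast
        then show ?thesis using v unfolding orth_def by blast
      qed
    qed
    then have "\<forall>y. b v y = 0"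
      using bil_zero_on_span[OF bil, of BV v] BV(4) by blast
    then show "v \<in> {0}" using nondeg unfolding nondegenerate_form_def by blast
  qed
  have "vec.dimle (orth b A) (card W + 0)"
    by (rule vec.rank_nullity_dimle[OF linh img ker orth_subspace[OF bil]])
  then have "vec.dim (orth b A) \<le> card W" using vec.dimle_dim by simp
  moreover have "vec.dim A \<le> CARD('n)" using BA(4) BV(1) finBV cBV card_mono by metis
  ultimately show ?thesis using cW by simp
qed

lemma orth_lower:
  fixes b :: "'a::field^'n::finite \<Rightarrow> 'a^'n \<Rightarrow> 'a"
  assumes bil: "bilinear_form b" and A: "vec.subspace A"
  shows "CARD('n) \<le> vec.dim A + vec.dim (orth b A)"
proof -
  obtain BA where BA: "BA \<subseteq> A" "vec.independent BA" "A \<subseteq> vec.span BA" "card BA = vec.dim A"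
    by (rule vec.basis_exists)
  define h where "h v = (\<Sum>w\<in>BA. b v w *s w)" for v
  have linh: "Vector_Spaces.linear (*s) (*s) h"
    unfolding h_def by (rule lin_sum_basis[OF bil])
  have img: "vec.dimle (h ` UNIV) (vec.dim A)"
  proof -
    have "h ` UNIV \<subseteq> vec.span BA"
      unfolding h_def by (auto intro!: vec.span_sum vec.span_scale simp: vec.span_base)
    then have "vec.dimle (h ` UNIV) (vec.dim (vec.span BA))"
      by (rule vec.dimle_dim_fd)
    then show ?thesis using vec.dim_span_eq_card_independent[OF BA(2)] BA(4) by simp
  qed
  have ker: "vec.dimle {v \<in> UNIV. h v = 0} (vec.dim (orth b A))"
  proof (rule vec.dimle_dim_fd, rule subsetI)
    fix v assume v: "v \<in> {v \<in> UNIV. h v = 0}"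
    have finBA: "finite BA" by (rule vec.finiteI_independent[OF BA(2)])
    have "\<forall>w\<in>BA. b v w = 0"
    proof
      fix w assume w: "w \<in> BA"
      have "(\<Sum>w\<in>BA. b v w *s w) = 0" using v h_def by simp
      from vec.independentD[OF BA(2) finBA subset_refl this w] show "b v w = 0" .
    qed
    then show "v \<in> orth b A" unfolding orth_def
      using bil_zero_on_span[OF bil, of BA v] BA(3) by blast
  qed
  have "vec.dimle (UNIV :: ('a^'n) set) (vec.dim A + vec.dim (orth b A))"
    using vec.rank_nullity_dimle[OF linh img ker vec.subspace_UNIV] by simp
  then have "vec.dim (UNIV :: ('a^'n) set) \<le> vec.dim A + vec.dim (orth b A)" by (rule vec.dimle_dim)
  then show ?thesis using vec_dim_UNIV by metis
qed



lemma char2_double: "(2::'a::field) = 0 \<Longrightarrow> (z::'a) + z = 0"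
proof -
  assume h: "(2::'a) = 0"
  have "z + z = 2 * z" by (simp only: mult_2)
  also have "\<dots> = 0" by (simp only: h mult_zero_left)
  finally show ?thesis .
qed

lemma char2_neg: "(2::'a::field) = 0 \<Longrightarrow> - (z::'a) = z"
  using char2_double[of z] by (simp add: neg_eq_iff_add_eq_0)

lemma kerQ_subspace:
  assumes char2: "(2::'a::field) = 0" and bil: "bilinear_form (b :: 'a^'n \<Rightarrow> 'a^'n \<Rightarrow> 'a)"
    and sym: "symmetric_form b"
  shows "vec.subspace (KerQ b)"
  unfolding vec.subspace_def KerQ_def
proof (intro conjI ballI allI)
  show "0 \<in> {x. b x x = 0}" using bil_zero1[OF bil] by simp
next
  fix x y assume x: "x \<in> {x. b x x = 0}" and y: "y \<in> {x. b x x = 0}"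
  have "b (x + y) (x + y) = b x x + b y y + (b x y + b x y)"
    using sym unfolding symmetric_form_def
    by (simp add: bil_add1[OF bil] bil_add2[OF bil] algebra_simps)
  also have "\<dots> = 0" using x y char2_double[OF char2] by simp
  finally show "x + y \<in> {x. b x x = 0}" by simp
next
  fix c x assume x: "x \<in> {x. b x x = 0}"
  show "c *s x \<in> {x. b x x = 0}" using x by (simp add: bil_scale1[OF bil] bil_scale2[OF bil])
qed

lemma ts_orth: "totally_singular b (KerQ b) \<Longrightarrow> KerQ b \<subseteq> orth b (KerQ b)"
  unfolding totally_singular_def orth_def by blast

lemma Sb_adj:
  assumes sym: "symmetric_form b" and u: "u \<in> S_b b"
  shows "b (u x) y = b x (u y)"
proof -
  have "b (u x) y = b y (u x)" using sym unfolding symmetric_form_def by simp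
  also have "\<dots> = b x (u y)" using u unfolding S_b_def by simp
  finally show ?thesis .
qed

lemma Sb_adj_pow:
  assumes sym: "symmetric_form b" and u: "u \<in> S_b b"
  shows "b ((u^^i) x) y = b x ((u^^i) y)"
proof (induction i arbitrary: y)
  case 0 then show ?case by simp
next
  case (Suc i)
  have "b ((u^^Suc i) x) y = b (u ((u^^i) x)) y" by simp
  also have "\<dots> = b ((u^^i) x) (u y)" by (rule Sb_adj[OF sym u])
  also have "\<dots> = b x ((u^^i) (u y))" by (rule Suc.IH)
  also have "(u^^i) (u y) = (u^^Suc i) y" by (simp add: funpow_swap1)
  finally show ?case .
qed

lemma Sb_adj_pow2:
  assumes sym: "symmetric_form b" and u: "u \<in> S_b b"
  shows "b ((u^^i) x) ((u^^j) x) = b x ((u^^(i+j)) x)"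
  using Sb_adj_pow[OF sym u, of i x "(u^^j) x"] by (simp add: funpow_add)

lemma descent:
  fixes a :: "nat \<Rightarrow> 'a::zero"
  assumes base: "\<forall>m\<ge>N. a m = 0"
    and step: "\<And>M. M \<ge> 2 \<Longrightarrow> \<forall>m\<ge>M. a m = 0 \<Longrightarrow> \<forall>m \<ge> (M+1) div 2. a m = 0"
  shows "\<forall>m\<ge>1. a m = 0"
proof -
  have "\<forall>m\<ge>M. a m = 0 \<Longrightarrow> \<forall>m\<ge>1. a m = 0" for M
  proof (induction M rule: less_induct)
    case (less M)
    show ?case
    proof (cases "M \<le> 1")
      case True then show ?thesis using less.prems by auto
    next
      case False
      then have "(M+1) div 2 < M" by simp
      moreover have "\<forall>m \<ge> (M+1) div 2. a m = 0" using step[of M] False less.prems by simp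
      ultimately show ?thesis using less.IH by blast
    qed
  qed
  then show ?thesis using base by blast
qed

lemma endo_pow_zero: "is_endo u \<Longrightarrow> (u^^k) 0 = 0"
  by (induction k) (auto simp: endo_zero)

lemma nil_pow_ge:
  assumes "is_endo u" "(u^^N) = (\<lambda>_. 0)" "m \<ge> N"
  shows "(u^^m) x = 0"
proof -
  have "u^^m = u^^(m-N) \<circ> u^^N" using assms(3) by (simp add: funpow_add[symmetric])
  then have "(u^^m) x = (u^^(m-N)) ((u^^N) x)" by simp
  also have "\<dots> = 0" using assms(2) endo_pow_zero[OF assms(1)] by simp
  finally show ?thesis .
qed

lemma structural:
  assumes bil: "bilinear_form b" and sym: "symmetric_form b"
    and u: "u \<in> S_b b" and nil: "nilpotent_endo u"
    and x: "x \<in> orth b (KerQ b)"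
  shows "u x \<in> KerQ b"
proof -
  have endo: "is_endo u" using u unfolding S_b_def by simp
  obtain N where N: "(u^^N) = (\<lambda>_. 0)" using nil unfolding nilpotent_endo_def by blast
  define a where "a m = b x ((u^^m) x)" for m
  have base: "\<forall>m\<ge>N. a m = 0"
    unfolding a_def using nil_pow_ge[OF endo N] bil_zero2[OF bil] by simp
  have step: "\<forall>m \<ge> (M+1) div 2. a m = 0" if M2: "M \<ge> 2" and hM: "\<forall>m\<ge>M. a m = 0" for M
  proof (intro allI impI)
    fix m assume m: "m \<ge> (M+1) div 2"
    have "b ((u^^m) x) ((u^^m) x) = a (m + m)" unfolding a_def by (rule Sb_adj_pow2[OF sym u])
    also have "\<dots> = 0" using hM m by simp
    finally have "(u^^m) x \<in> KerQ b" unfolding KerQ_def by simp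
    then show "a m = 0" using x unfolding a_def orth_def by blast
  qed
  have "\<forall>m\<ge>1. a m = 0" by (rule descent[OF base step])
  then have "a 2 = 0" by simp
  moreover have "b (u x) (u x) = a 2"
    using Sb_adj_pow2[OF sym u, of 1 x 1] unfolding a_def by (simp add: numeral_2_eq_2)
  ultimately show ?thesis unfolding KerQ_def by simp
qed

lemma Ab_Sb:
  assumes char2: "(2::'a::field) = 0" and bil: "bilinear_form (b :: 'a^'n \<Rightarrow> 'a^'n \<Rightarrow> 'a)"
    and u: "u \<in> A_b b"
  shows "u \<in> S_b b"
proof -
  have endo: "is_endo u" and alt: "\<And>x. b x (u x) = 0" using u unfolding A_b_def by auto
  have "b x (u y) = b y (u x)" for x y
  proof -
    have "0 = b (x + y) (u (x + y))" using alt by simp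
    also have "\<dots> = b x (u x) + b x (u y) + b y (u x) + b y (u y)"
      by (simp add: endo_add[OF endo] bil_add1[OF bil] bil_add2[OF bil] algebra_simps)
    also have "\<dots> = b x (u y) + b y (u x)" using alt by simp
    finally have "b x (u y) = - b y (u x)" by (simp add: eq_neg_iff_add_eq_0)
    then show ?thesis using char2_neg[OF char2] by simp
  qed
  then show ?thesis using endo unfolding S_b_def by simp
qed



definition lin_on :: "('a::field^'n) set \<Rightarrow> ('a^'n \<Rightarrow> 'a^'n) \<Rightarrow> bool" where
  "lin_on E u \<longleftrightarrow> (\<forall>x\<in>E. \<forall>y\<in>E. u (x+y) = u x + u y) \<and> (\<forall>c. \<forall>x\<in>E. u (c *s x) = c *s u x)"

lemma lin_on_zero: "vec.subspace E \<Longrightarrow> lin_on E u \<Longrightarrow> u 0 = 0"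
  unfolding lin_on_def using vec.subspace_0[of E] by (metis vector_smult_lzero)

lemma lin_on_span_zero:
  assumes E: "vec.subspace E" and lin: "lin_on E u" and XE: "X \<subseteq> E"
    and z: "\<forall>x\<in>X. u x = 0" and y: "y \<in> vec.span X"
  shows "u y = 0"
proof -
  define P where "P = {y \<in> E. u y = 0}"
  have "vec.subspace P"
    unfolding vec.subspace_def P_def
  proof (intro conjI ballI allI)
    show "0 \<in> {y \<in> E. u y = 0}" using vec.subspace_0[OF E] lin_on_zero[OF E lin] by simp
  next
    fix x y assume "x \<in> {y \<in> E. u y = 0}" "y \<in> {y \<in> E. u y = 0}"
    then show "x + y \<in> {y \<in> E. u y = 0}" using lin vec.subspace_add[OF E] unfolding lin_on_def by simp
  next
    fix c x assume "x \<in> {y \<in> E. u y = 0}"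
    then show "c *s x \<in> {y \<in> E. u y = 0}" using lin vec.subspace_scale[OF E] unfolding lin_on_def by simp
  qed
  moreover have "X \<subseteq> P" using XE z P_def by blast
  ultimately have "vec.span X \<subseteq> P" by (rule vec.span_minimal[rotated])
  then show ?thesis using y P_def by blast
qed

lemma ev_lin_app: "Vector_Spaces.linear (endo_scale :: 'a::field \<Rightarrow> ('a^'n \<Rightarrow> 'a^'n) \<Rightarrow> _) (*s) (\<lambda>u. u v)"
  unfolding Vector_Spaces.linear_iff
proof (intro conjI allI)
  show "vector_space (endo_scale :: 'a::field \<Rightarrow> ('a^'n \<Rightarrow> 'a^'n) \<Rightarrow> _)" by (rule endo_vs)
  show "vector_space ((*s) :: 'a \<Rightarrow> 'a^'n \<Rightarrow> 'a^'n)" by unfold_locales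
qed (simp_all add: endo_scale_def)

lemma endo_sub_ker:
  assumes "endo.subspace (S :: ('a::field^'n \<Rightarrow> 'a^'n) set)"
  shows "endo.subspace {u\<in>S. u v = 0}"
  using assms unfolding endo.subspace_def by (simp add: endo_scale_def)

lemma fun_zeroI: "(\<And>v. u v = 0) \<Longrightarrow> u = (0 :: 'a \<Rightarrow> 'b::zero)"
  by (simp add: fun_eq_iff)

lemma maps_bound:
  fixes E T :: "('a::field^'n) set"
  assumes E: "vec.subspace E" and T: "vec.subspace T"
  shows "\<forall>A (S :: ('a^'n \<Rightarrow> 'a^'n) set). vec.subspace A \<longrightarrow> A \<subseteq> E \<longrightarrow> vec.dim E - vec.dim A \<le> m \<longrightarrow> endo.subspace S \<longrightarrow>
     (\<forall>u\<in>S. (\<forall>v. v \<notin> E \<longrightarrow> u v = 0) \<and> lin_on E u \<and> (\<forall>v\<in>E. u v \<in> T) \<and> (\<forall>a\<in>A. u a = 0))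
     \<longrightarrow> endo.dimle S (vec.dim T * m)"
proof (induction m)
  case 0
  show ?case
  proof (intro allI impI)
    fix A and S :: "('a^'n \<Rightarrow> 'a^'n) set"
    assume A: "vec.subspace A" and AE: "A \<subseteq> E" and d: "vec.dim E - vec.dim A \<le> 0"
      and S: "endo.subspace S"
      and hS: "\<forall>u\<in>S. (\<forall>v. v \<notin> E \<longrightarrow> u v = 0) \<and> lin_on E u \<and> (\<forall>v\<in>E. u v \<in> T) \<and> (\<forall>a\<in>A. u a = 0)"
    have "A = E" using vec.subspace_dim_equal[OF A E AE] d by simp
    then have "S \<subseteq> {0}" using hS by (auto intro!: fun_zeroI)
    then show "endo.dimle S (vec.dim T * 0)" using endo.dimle_zero by simp
  qed
next
  case (Suc m)
  show ?case
  proof (intro allI impI)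
    fix A and S :: "('a^'n \<Rightarrow> 'a^'n) set"
    assume A: "vec.subspace A" and AE: "A \<subseteq> E" and d: "vec.dim E - vec.dim A \<le> Suc m"
      and S: "endo.subspace S"
      and hS: "\<forall>u\<in>S. (\<forall>v. v \<notin> E \<longrightarrow> u v = 0) \<and> lin_on E u \<and> (\<forall>v\<in>E. u v \<in> T) \<and> (\<forall>a\<in>A. u a = 0)"
    show "endo.dimle S (vec.dim T * Suc m)"
    proof (cases "vec.dim E - vec.dim A \<le> m")
      case True
      then have "endo.dimle S (vec.dim T * m)" using Suc.IH A AE S hS by blast
      then show ?thesis by (rule endo.dimle_mono) simp
    next
      case False
      then have "A \<noteq> E" by auto
      then obtain v where v: "v \<in> E" "v \<notin> A" using AE by blast
      define A' where "A' = vec.span (insert v A)"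
      have A'sub: "vec.subspace A'" unfolding A'_def by simp
      have A'E: "A' \<subseteq> E" unfolding A'_def using v(1) AE E by (simp add: vec.span_minimal)
      have spA: "vec.span A = A" by (rule vec.span_eq_iff[THEN iffD2, OF A])
      have "v \<notin> vec.span A" unfolding spA by (rule v(2))
      then have dA': "vec.dim A' = vec.dim A + 1" unfolding A'_def by (simp add: vec.dim_insert)
      have dE: "vec.dim A' \<le> vec.dim E" using A'E by (rule vec.dim_subset)
      have d': "vec.dim E - vec.dim A' \<le> m" using d dA' by simp
      define S' where "S' = {u\<in>S. u v = 0}"
      have S'sub: "endo.subspace S'" unfolding S'_def by (rule endo_sub_ker[OF S])
      have hS': "\<forall>u\<in>S'. (\<forall>w. w \<notin> E \<longrightarrow> u w = 0) \<and> lin_on E u \<and> (\<forall>w\<in>E. u w \<in> T) \<and> (\<forall>a\<in>A'. u a = 0)"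
      proof
        fix u assume u: "u \<in> S'"
        then have uS: "u \<in> S" and uv: "u v = 0" unfolding S'_def by auto
        have lin: "lin_on E u" using hS uS by blast
        have "\<forall>a\<in>A'. u a = 0"
        proof
          fix a assume "a \<in> A'"
          then show "u a = 0"
            unfolding A'_def
            by (rule lin_on_span_zero[OF E lin, of "insert v A", rotated 2]) (use v AE hS uS uv in auto)
        qed
        then show "(\<forall>w. w \<notin> E \<longrightarrow> u w = 0) \<and> lin_on E u \<and> (\<forall>w\<in>E. u w \<in> T) \<and> (\<forall>a\<in>A'. u a = 0)"
          using hS uS by blast
      qed
      have ker: "endo.dimle {u\<in>S. u v = 0} (vec.dim T * m)"
        using Suc.IH A'sub A'E d' S'sub hS' unfolding S'_def by blast
      have img: "vec.dimle ((\<lambda>u. u v) ` S) (vec.dim T)"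
      proof (rule vec.dimle_dim_fd)
        show "(\<lambda>u. u v) ` S \<subseteq> T" using hS v(1) by blast
      qed
      have "endo.dimle S (vec.dim T + vec.dim T * m)"
        by (rule ev.rank_nullity_dimle[OF ev_lin_app img ker S])
      then show ?thesis by simp
    qed
  qed
qed



lemma tri_step: "Suc t + t * (t + 1) div 2 = Suc t * (Suc t + 1) div 2"
proof -
  have "Suc t * (Suc t + 1) = t * (t + 1) + Suc t * 2" by (simp add: algebra_simps)
  then show ?thesis by simp
qed

lemma tri_step2: "t + t * (t - 1) div 2 = Suc t * (Suc t - 1) div 2"
proof -
  have "Suc t * (Suc t - 1) = t * (t - 1) + t * 2" by (cases t) (simp_all add: algebra_simps)
  then show ?thesis by simp
qed

lemma sym_bound:
  fixes b :: "'a::field^'n \<Rightarrow> 'a^'n \<Rightarrow> 'a"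
  assumes bil: "bilinear_form b" and sym: "symmetric_form b" and nondeg: "nondegenerate_form b"
  shows "\<forall>T (S :: ('a^'n \<Rightarrow> 'a^'n) set). vec.subspace T \<longrightarrow> vec.dim T \<le> t \<longrightarrow> endo.subspace S \<longrightarrow>
     (\<forall>u\<in>S. (\<forall>x y. b (u x) y = b x (u y)) \<and> (\<forall>v. u v \<in> T) \<and> (al \<longrightarrow> (\<forall>x. b x (u x) = 0)))
     \<longrightarrow> endo.dimle S ((if al then t * (t - 1) else t * (t + 1)) div 2)"
proof (induction t)
  case 0
  show ?case
  proof (intro allI impI)
    fix T and S :: "('a^'n \<Rightarrow> 'a^'n) set"
    assume T: "vec.subspace T" and d: "vec.dim T \<le> 0" and S: "endo.subspace S"
      and hS: "\<forall>u\<in>S. (\<forall>x y. b (u x) y = b x (u y)) \<and> (\<forall>v. u v \<in> T) \<and> (al \<longrightarrow> (\<forall>x. b x (u x) = 0))"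
    have "T \<subseteq> {0}" using d by simp
    then have "S \<subseteq> {0}" using hS by (auto intro!: fun_zeroI)
    then show "endo.dimle S ((if al then 0 * (0 - 1) else 0 * (0 + 1)) div 2)" using endo.dimle_zero by simp
  qed
next
  case (Suc t)
  show ?case
  proof (intro allI impI)
    fix T and S :: "('a^'n \<Rightarrow> 'a^'n) set"
    assume T: "vec.subspace T" and d: "vec.dim T \<le> Suc t" and S: "endo.subspace S"
      and hS: "\<forall>u\<in>S. (\<forall>x y. b (u x) y = b x (u y)) \<and> (\<forall>v. u v \<in> T) \<and> (al \<longrightarrow> (\<forall>x. b x (u x) = 0))"
    show "endo.dimle S ((if al then Suc t * (Suc t - 1) else Suc t * (Suc t + 1)) div 2)"
    proof (cases "T \<subseteq> {0}")
      case True
      then have "S \<subseteq> {0}" using hS by (auto intro!: fun_zeroI)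
      then show ?thesis using endo.dimle_zero endo.dimle_mono by blast
    next
      case False
      then obtain x where x: "x \<in> T" "x \<noteq> 0" by blast
      then obtain v where "b x v \<noteq> 0" using nondeg unfolding nondegenerate_form_def by blast
      then have bvx: "b v x \<noteq> 0" using sym unfolding symmetric_form_def by simp
      define T' where "T' = T \<inter> {y. b v y = 0}"
      have T'sub: "vec.subspace T'"
        unfolding T'_def
      proof (rule vec.subspace_inter[OF T])
        show "vec.subspace {y. b v y = 0}"
          unfolding vec.subspace_def using bil_zero2[OF bil] bil_add2[OF bil] bil_scale2[OF bil] by simp
      qed
      have psub: "T' \<subset> T" using x bvx T'_def by blast
      have e1: "vec.span T = T" by (rule vec.span_eq_iff[THEN iffD2, OF T])
      have e2: "vec.span T' = T'" by (rule vec.span_eq_iff[THEN iffD2, OF T'sub])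
      have "vec.span T' \<subset> vec.span T" unfolding e1 e2 by (rule psub)
      then have "vec.dim T' < vec.dim T" by (rule vec.dim_psubset)
      then have dT': "vec.dim T' \<le> t" using d by simp
      define S' where "S' = {u\<in>S. u v = 0}"
      have S'sub: "endo.subspace S'" unfolding S'_def by (rule endo_sub_ker[OF S])
      have hS': "\<forall>u\<in>S'. (\<forall>x y. b (u x) y = b x (u y)) \<and> (\<forall>w. u w \<in> T') \<and> (al \<longrightarrow> (\<forall>x. b x (u x) = 0))"
      proof
        fix u assume u: "u \<in> S'"
        then have uS: "u \<in> S" and uv: "u v = 0" unfolding S'_def by auto
        have "\<forall>w. b v (u w) = 0"
        proof
          fix w
          have "b v (u w) = b (u v) w" using hS uS by simp
          also have "\<dots> = 0" using uv bil_zero1[OF bil] by simp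
          finally show "b v (u w) = 0" .
        qed
        then show "(\<forall>x y. b (u x) y = b x (u y)) \<and> (\<forall>w. u w \<in> T') \<and> (al \<longrightarrow> (\<forall>x. b x (u x) = 0))"
          using hS uS unfolding T'_def by blast
      qed
      have ker: "endo.dimle {u\<in>S. u v = 0} ((if al then t * (t - 1) else t * (t + 1)) div 2)"
        using Suc.IH T'sub dT' S'sub hS' unfolding S'_def by blast
      show ?thesis
      proof (cases al)
        case True
        have img: "vec.dimle ((\<lambda>u. u v) ` S) t"
        proof -
          have "(\<lambda>u. u v) ` S \<subseteq> T'" using hS True unfolding T'_def by blast
          then have "vec.dimle ((\<lambda>u. u v) ` S) (vec.dim T')" by (rule vec.dimle_dim_fd)
          then show ?thesis using dT' by (rule vec.dimle_mono)
        qed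
        have "endo.dimle S (t + (t * (t - 1)) div 2)"
          using ev.rank_nullity_dimle[OF ev_lin_app img _ S] ker True by simp
        then show ?thesis using True tri_step2[of t] by simp
      next
        case False
        have img: "vec.dimle ((\<lambda>u. u v) ` S) (Suc t)"
        proof -
          have "(\<lambda>u. u v) ` S \<subseteq> T" using hS by blast
          then have "vec.dimle ((\<lambda>u. u v) ` S) (vec.dim T)" by (rule vec.dimle_dim_fd)
          then show ?thesis using d by (rule vec.dimle_mono)
        qed
        have "endo.dimle S (Suc t + (t * (t + 1)) div 2)"
          using ev.rank_nullity_dimle[OF ev_lin_app img _ S] ker False by simp
        then show ?thesis using False tri_step[of t] by simp
      qed
    qed
  qed
qed



fun gseq :: "(nat \<Rightarrow> 'a::field) \<Rightarrow> nat \<Rightarrow> 'a" where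
  "gseq c 0 = 1"
| "gseq c (Suc N) = (\<Sum>j\<le>N. c j * gseq c (N - j))"

definition philin :: "('a::field^'n) set \<Rightarrow> ('a^'n \<Rightarrow> 'a) \<Rightarrow> bool" where
  "philin E f \<longleftrightarrow> (\<forall>x\<in>E. \<forall>y\<in>E. f (x+y) = f x + f y) \<and> (\<forall>c. \<forall>x\<in>E. f (c *s x) = c * f x)"

lemma philin_zero: "vec.subspace E \<Longrightarrow> philin E f \<Longrightarrow> f 0 = 0"
  unfolding philin_def using vec.subspace_0[of E] by (metis mult_zero_left vector_smult_lzero)

lemma lin_on_sum:
  assumes E: "vec.subspace E" and lin: "lin_on E w"
  shows "finite I \<Longrightarrow> (\<forall>i\<in>I. v i \<in> E) \<Longrightarrow> w (\<Sum>i\<in>I. c i *s v i) = (\<Sum>i\<in>I. c i *s w (v i))"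
proof (induction I rule: finite_induct)
  case empty then show ?case using lin_on_zero[OF E lin] by simp
next
  case (insert i I)
  have s1: "(\<Sum>i\<in>I. c i *s v i) \<in> E"
    using insert.prems by (intro vec.subspace_sum[OF E] vec.subspace_scale[OF E]) auto
  have s2: "c i *s v i \<in> E" using insert.prems vec.subspace_scale[OF E] by simp
  have "w (\<Sum>i\<in>insert i I. c i *s v i) = w (c i *s v i + (\<Sum>i\<in>I. c i *s v i))"
    using insert.hyps by simp
  also have "\<dots> = w (c i *s v i) + w (\<Sum>i\<in>I. c i *s v i)"
    using lin s1 s2 unfolding lin_on_def by blast
  also have "w (c i *s v i) = c i *s w (v i)" using lin insert.prems unfolding lin_on_def by simp
  also have "w (\<Sum>i\<in>I. c i *s v i) = (\<Sum>i\<in>I. c i *s w (v i))" using insert by simp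
  finally show ?case using insert.hyps by simp
qed

lemma philin_sum:
  assumes E: "vec.subspace E" and lin: "philin E f"
  shows "finite I \<Longrightarrow> (\<forall>i\<in>I. v i \<in> E) \<Longrightarrow> f (\<Sum>i\<in>I. c i *s v i) = (\<Sum>i\<in>I. c i * f (v i))"
proof (induction I rule: finite_induct)
  case empty then show ?case using philin_zero[OF E lin] by simp
next
  case (insert i I)
  have s1: "(\<Sum>i\<in>I. c i *s v i) \<in> E"
    using insert.prems by (intro vec.subspace_sum[OF E] vec.subspace_scale[OF E]) auto
  have s2: "c i *s v i \<in> E" using insert.prems vec.subspace_scale[OF E] by simp
  have "f (\<Sum>i\<in>insert i I. c i *s v i) = f (c i *s v i + (\<Sum>i\<in>I. c i *s v i))"
    using insert.hyps by simp
  also have "\<dots> = f (c i *s v i) + f (\<Sum>i\<in>I. c i *s v i)"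
    using lin s1 s2 unfolding philin_def by blast
  also have "f (c i *s v i) = c i * f (v i)" using lin insert.prems unfolding philin_def by simp
  also have "f (\<Sum>i\<in>I. c i *s v i) = (\<Sum>i\<in>I. c i * f (v i))" using insert by simp
  finally show ?case using insert.hyps by simp
qed

lemma pow_on_E: "(\<forall>v\<in>E. u v \<in> E) \<Longrightarrow> x \<in> E \<Longrightarrow> (u^^j) x \<in> E"
  by (induction j) auto

lemma nil_on_ge:
  assumes E: "vec.subspace E" and lin: "lin_on E u" and k: "\<forall>v\<in>E. (u^^k) v = 0"
    and x: "x \<in> E" and m: "m \<ge> k"
  shows "(u^^m) x = 0"
proof -
  have z: "(u^^i) 0 = 0" for i by (induction i) (auto simp: lin_on_zero[OF E lin])
  have "u^^m = u^^(m-k) \<circ> u^^k" using m by (simp add: funpow_add[symmetric])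
  then have "(u^^m) x = (u^^(m-k)) ((u^^k) x)" by simp
  then show ?thesis using k x z by simp
qed

lemma trace_lemma:
  assumes E: "vec.subspace E" and xE: "x \<in> E"
    and uE: "\<forall>v\<in>E. u v \<in> E" and ulin: "lin_on E u" and unil: "\<exists>k. \<forall>v\<in>E. (u^^k) v = 0"
    and zdef: "\<forall>v\<in>E. z v = \<phi> v *s x" and phil: "philin E \<phi>" and phix: "\<phi> x = 0"
    and wnil: "\<exists>k. \<forall>v\<in>E. ((\<lambda>v. u v + z v)^^k) v = 0"
  shows "\<phi> (u x) = 0"
proof -
  define w where "w = (\<lambda>v. u v + z v)"
  have wE: "\<forall>v\<in>E. w v \<in> E"
    using uE zdef xE vec.subspace_add[OF E] vec.subspace_scale[OF E] unfolding w_def by simp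
  have wlin: "lin_on E w"
    unfolding lin_on_def w_def
  proof (intro conjI ballI allI)
    fix a b assume a: "a \<in> E" and b: "b \<in> E"
    have ab: "a + b \<in> E" using a b vec.subspace_add[OF E] by simp
    show "u (a + b) + z (a + b) = u a + z a + (u b + z b)"
      using ulin phil a b ab zdef unfolding lin_on_def philin_def
      by (simp add: vector_sadd_rdistrib algebra_simps)
  next
    fix c a assume a: "a \<in> E"
    have ca: "c *s a \<in> E" using a vec.subspace_scale[OF E] by simp
    show "u (c *s a) + z (c *s a) = c *s (u a + z a)"
      using ulin phil a ca zdef unfolding lin_on_def philin_def
      by (simp add: vector_add_ldistrib)
  qed
  have upE: "(u^^j) x \<in> E" for j using pow_on_E[OF uE xE] .
  define c where "c j = \<phi> ((u^^j) x)" for j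
  define g where "g = gseq c"
  have wu: "w ((u^^j) x) = (u^^Suc j) x + c j *s x" for j
    using zdef upE unfolding w_def c_def by simp
  have claim1: "(w^^N) x = (\<Sum>j\<le>N. g (N - j) *s (u^^j) x)" for N
  proof (induction N)
    case 0 then show ?case by (simp add: g_def)
  next
    case (Suc N)
    have "(w^^Suc N) x = w (\<Sum>j\<le>N. g (N - j) *s (u^^j) x)" using Suc by simp
    also have "\<dots> = (\<Sum>j\<le>N. g (N - j) *s w ((u^^j) x))"
      by (rule lin_on_sum[OF E wlin]) (use upE in auto)
    also have "\<dots> = (\<Sum>j\<le>N. g (N - j) *s (u^^Suc j) x) + (\<Sum>j\<le>N. g (N - j) * c j) *s x"
      by (simp add: wu vector_add_ldistrib sum.distrib vec.scale_sum_left)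
    also have "(\<Sum>j\<le>N. g (N - j) * c j) = g (Suc N)"
      by (simp add: g_def mult.commute)
    also have "(\<Sum>j\<le>N. g (N - j) *s (u^^Suc j) x) + g (Suc N) *s x
        = (\<Sum>j\<le>Suc N. g (Suc N - j) *s (u^^j) x)"
      unfolding sum.atMost_Suc_shift by (simp add: add.commute del: sum.atMost_Suc)
    finally show ?case .
  qed
  have claim2: "\<phi> ((w^^N) x) = g (Suc N)" for N
  proof -
    have "\<phi> ((w^^N) x) = (\<Sum>j\<le>N. g (N - j) * \<phi> ((u^^j) x))"
      unfolding claim1 by (rule philin_sum[OF E phil]) (use upE in auto)
    also have "\<dots> = g (Suc N)" by (simp add: g_def c_def mult.commute)
    finally show ?thesis .
  qed
  obtain k where k: "\<forall>v\<in>E. (w^^k) v = 0" using wnil unfolding w_def by blast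
  have gz: "g M = 0" if Mk: "M > k" for M
  proof -
    obtain N where N: "M = Suc N" "N \<ge> k" using Mk by (cases M) auto
    have "(w^^N) x = 0" by (rule nil_on_ge[OF E wlin k xE N(2)])
    then have "g (Suc N) = \<phi> 0" using claim2[of N] by simp
    then show ?thesis using N philin_zero[OF E phil] by simp
  qed
  obtain p where p: "\<forall>v\<in>E. (u^^p) v = 0" using unil by blast
  have cz: "c j = 0" if "j \<ge> p" for j
    unfolding c_def using nil_on_ge[OF E ulin p xE that] philin_zero[OF E phil] by simp
  show ?thesis
  proof (rule ccontr)
    assume "\<phi> (u x) \<noteq> 0"
    then have c1: "c 1 \<noteq> 0" unfolding c_def by simp
    define Cs where "Cs = {j. c j \<noteq> 0}"
    have finCs: "finite Cs"
    proof (rule finite_subset[of _ "{..<p}"])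
      show "Cs \<subseteq> {..<p}" using cz unfolding Cs_def by (auto simp: not_less[symmetric])
    qed simp
    have "1 \<in> Cs" using c1 Cs_def by simp
    define bm where "bm = Max Cs"
    have bmC: "bm \<in> Cs" using finCs \<open>1 \<in> Cs\<close> unfolding bm_def by (intro Max_in) auto
    have bmax: "j \<in> Cs \<Longrightarrow> j \<le> bm" for j using finCs unfolding bm_def by simp
    define Gs where "Gs = {N. g N \<noteq> 0}"
    have finGs: "finite Gs"
    proof (rule finite_subset[of _ "{..k}"])
      show "Gs \<subseteq> {..k}" using gz unfolding Gs_def by (auto simp: not_less[symmetric])
    qed simp
    have "0 \<in> Gs" unfolding Gs_def g_def by simp
    define am where "am = Max Gs"
    have amG: "am \<in> Gs" using finGs \<open>0 \<in> Gs\<close> unfolding am_def by (intro Max_in) auto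
    have amax: "N \<in> Gs \<Longrightarrow> N \<le> am" for N using finGs unfolding am_def by simp
    have "g (Suc (am + bm)) = (\<Sum>j\<le>am + bm. c j * g (am + bm - j))"
      by (simp add: g_def)
    also have "\<dots> = (\<Sum>j\<le>am + bm. if j = bm then c bm * g am else 0)"
    proof (rule sum.cong)
      fix j assume "j \<in> {..am + bm}"
      show "c j * g (am + bm - j) = (if j = bm then c bm * g am else 0)"
      proof (cases "j = bm")
        case True then show ?thesis by simp
      next
        case False
        show ?thesis
        proof (cases "j < bm")
          case True
          then have "am + bm - j \<notin> Gs" using amax by fastforce
          then show ?thesis using False unfolding Gs_def by simp
        next
          case False2: False
          then have "j \<notin> Cs" using bmax False by fastforce
          then show ?thesis using False unfolding Cs_def by simp
        qed
      qed
    qed simp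
    also have "\<dots> = c bm * g am" by simp
    finally have e: "g (Suc (am + bm)) = c bm * g am" .
    have "Suc (am + bm) \<notin> Gs" using amax by fastforce
    then have "g (Suc (am + bm)) = 0" unfolding Gs_def by simp
    moreover have "c bm * g am \<noteq> 0" using bmC amG unfolding Cs_def Gs_def by simp
    ultimately show False using e by simp
  qed
qed



lemma ee_lin_restr:
  fixes p :: "'a::field^'n \<Rightarrow> 'a^'n" and H :: "('a^'n) set"
  assumes padd: "\<And>a b. p (a + b) = p a + p b" and pscale: "\<And>t a. p (t *s a) = t *s p a"
  shows "Vector_Spaces.linear (endo_scale :: 'a \<Rightarrow> ('a^'n \<Rightarrow> 'a^'n) \<Rightarrow> _) endo_scale
          (\<lambda>u v. if v \<in> H then p (u v) else 0)"
  unfolding Vector_Spaces.linear_iff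
proof (intro conjI allI)
  show "vector_space (endo_scale :: 'a::field \<Rightarrow> ('a^'n \<Rightarrow> 'a^'n) \<Rightarrow> _)" by (rule endo_vs)
  show "vector_space (endo_scale :: 'a::field \<Rightarrow> ('a^'n \<Rightarrow> 'a^'n) \<Rightarrow> _)" by (rule endo_vs)
qed (auto simp: endo_scale_def fun_eq_iff padd pscale)

lemma zero_map_of:
  assumes E: "vec.subspace E" and "E \<subseteq> {0}" and "\<forall>v. v \<notin> E \<longrightarrow> u v = 0" and "\<forall>v\<in>E. u v \<in> E"
  shows "u = 0"
proof (rule fun_zeroI)
  fix v show "u v = 0" using assms by (cases "v \<in> E") auto
qed

context vector_space_pair begin
lemma linear_subspace_kernel_inter:
  assumes "Vector_Spaces.linear s1 s2 f" "vs1.subspace S"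
  shows "vs1.subspace {x\<in>S. f x = 0}"
proof -
  have "vs1.subspace (S \<inter> {x. f x = 0})"
    by (rule vs1.subspace_inter[OF assms(2) linear_subspace_kernel[OF assms(1)]])
  moreover have "S \<inter> {x. f x = 0} = {x\<in>S. f x = 0}" by blast
  ultimately show ?thesis by simp
qed
end

lemma gerst:
  shows "\<forall>E (N :: ('a::field^'n \<Rightarrow> 'a^'n) set). vec.subspace E \<longrightarrow> vec.dim E \<le> d \<longrightarrow> endo.subspace N \<longrightarrow>
     (\<forall>u\<in>N. (\<forall>v. v \<notin> E \<longrightarrow> u v = 0) \<and> (\<forall>v\<in>E. u v \<in> E) \<and> lin_on E u \<and> (\<exists>k. \<forall>v\<in>E. (u^^k) v = 0))
     \<longrightarrow> endo.dimle N (d * (d - 1) div 2)"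
proof (induction d)
  case 0
  show ?case
  proof (intro allI impI)
    fix E and N :: "('a^'n \<Rightarrow> 'a^'n) set"
    assume E: "vec.subspace E" and d: "vec.dim E \<le> 0" and N: "endo.subspace N"
      and hN: "\<forall>u\<in>N. (\<forall>v. v \<notin> E \<longrightarrow> u v = 0) \<and> (\<forall>v\<in>E. u v \<in> E) \<and> lin_on E u \<and> (\<exists>k. \<forall>v\<in>E. (u^^k) v = 0)"
    have "E \<subseteq> {0}" using d by simp
    have "N \<subseteq> {0}"
    proof
      fix u assume "u \<in> N" then show "u \<in> {0}" using zero_map_of[OF E \<open>E \<subseteq> {0}\<close>] hN by simp
    qed
    then show "endo.dimle N (0 * (0 - 1) div 2)" using endo.dimle_zero by simp
  qed
next
  case (Suc d)
  show ?case
  proof (intro allI impI)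
    fix E and N :: "('a^'n \<Rightarrow> 'a^'n) set"
    assume E: "vec.subspace E" and dE: "vec.dim E \<le> Suc d" and N: "endo.subspace N"
      and hN: "\<forall>u\<in>N. (\<forall>v. v \<notin> E \<longrightarrow> u v = 0) \<and> (\<forall>v\<in>E. u v \<in> E) \<and> lin_on E u \<and> (\<exists>k. \<forall>v\<in>E. (u^^k) v = 0)"
    show "endo.dimle N (Suc d * (Suc d - 1) div 2)"
    proof (cases "E \<subseteq> {0}")
      case True
      have "N \<subseteq> {0}"
      proof
        fix u assume "u \<in> N" then show "u \<in> {0}" using zero_map_of[OF E True] hN by simp
      qed
      then have "endo.dimle N 0" by (rule endo.dimle_zero)
      then show ?thesis by (rule endo.dimle_mono) simp
    next
      case False
      then obtain x where xE: "x \<in> E" and x0: "x \<noteq> 0" by blast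
      have "\<exists>i. x $ i \<noteq> 0" using x0 by (simp add: vec_eq_iff)
      then obtain i where xi: "x $ i \<noteq> 0" by blast
      define c where "c v = v $ i / x $ i" for v :: "'a^'n"
      define p where "p v = v - c v *s x" for v
      have cx: "c x = 1" using xi by (simp add: c_def)
      have cadd: "c (a + b) = c a + c b" for a b by (simp add: c_def add_divide_distrib)
      have cscale: "c (t *s a) = t * c a" for t a by (simp add: c_def)
      have padd: "p (a + b) = p a + p b" for a b by (simp add: p_def cadd vector_sadd_rdistrib)
      have pscale: "p (t *s a) = t *s p a" for t a
        by (simp add: p_def cscale vector_ssub_ldistrib vector_smult_assoc)
      have cp: "c (p v) = 0" for v by (simp add: p_def c_def xi)
      have pE: "v \<in> E \<Longrightarrow> p v \<in> E" for v
        unfolding p_def using xE vec.subspace_diff[OF E] vec.subspace_scale[OF E] by simp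
      have decomp: "v = p v + c v *s x" for v by (simp add: p_def)
      define H where "H = {v \<in> E. c v = 0}"
      have Hsub: "vec.subspace H"
        unfolding H_def vec.subspace_def using vec.subspace_0[OF E] vec.subspace_add[OF E]
          vec.subspace_scale[OF E] by (auto simp: cadd cscale c_def)
      have HE: "H \<subseteq> E" unfolding H_def by blast
      have pH: "v \<in> E \<Longrightarrow> p v \<in> H" for v using pE cp H_def by simp
      have ph: "h \<in> H \<Longrightarrow> p h = h" for h by (simp add: p_def H_def)
      have "x \<notin> H" using cx H_def by simp
      then have psub: "H \<subset> E" using HE xE by blast
      have eH: "vec.span H = H" by (rule vec.span_eq_iff[THEN iffD2, OF Hsub])
      have eE: "vec.span E = E" by (rule vec.span_eq_iff[THEN iffD2, OF E])
      have "vec.span H \<subset> vec.span E" unfolding eH eE by (rule psub)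
      then have "vec.dim H < vec.dim E" by (rule vec.dim_psubset)
      then have dH: "vec.dim H \<le> d" using dE by simp
      define Nx where "Nx = (\<lambda>u. u x) ` N"
      define r where "r = vec.dim Nx"
      have Nxsub: "vec.subspace Nx" unfolding Nx_def by (rule ev.linear_subspace_image[OF ev_lin_app N])
      have NxE: "Nx \<subseteq> E" unfolding Nx_def using hN xE by blast
      have img1: "vec.dimle ((\<lambda>u. u x) ` N) r"
        unfolding r_def Nx_def by (rule vec.dimle_dim_fd) simp
      define W where "W = {u\<in>N. u x = 0}"
      have Wsub: "endo.subspace W" unfolding W_def by (rule endo_sub_ker[OF N])
      define \<beta> where "\<beta> u = (\<lambda>v. if v \<in> H then p (u v) else 0)" for u :: "'a^'n \<Rightarrow> 'a^'n"
      have linb: "Vector_Spaces.linear endo_scale endo_scale \<beta>"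
        unfolding \<beta>_def by (rule ee_lin_restr[OF padd pscale])
      have bWsub: "endo.subspace (\<beta> ` W)" by (rule ee.linear_subspace_image[OF linb Wsub])
      have hbW: "\<forall>w\<in>\<beta> ` W. (\<forall>v. v \<notin> H \<longrightarrow> w v = 0) \<and> (\<forall>v\<in>H. w v \<in> H) \<and> lin_on H w \<and> (\<exists>k. \<forall>v\<in>H. (w^^k) v = 0)"
      proof
        fix w assume "w \<in> \<beta> ` W"
        then obtain u where uW: "u \<in> W" and wdef: "w = \<beta> u" by blast
        have uN: "u \<in> N" and ux: "u x = 0" using uW W_def by auto
        have uE: "\<forall>v\<in>E. u v \<in> E" and ulin: "lin_on E u" and unil: "\<exists>k. \<forall>v\<in>E. (u^^k) v = 0"
          using hN uN by auto
        have wH: "\<forall>v\<in>H. w v \<in> H" using uE HE pH unfolding wdef \<beta>_def by auto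
        have wlin: "lin_on H w"
          unfolding lin_on_def
        proof (intro conjI ballI allI)
          fix a b assume a: "a \<in> H" and b: "b \<in> H"
          have abH: "a + b \<in> H" using a b vec.subspace_add[OF Hsub] by simp
          have aE: "a \<in> E" and bE: "b \<in> E" using a b HE by auto
          have "u (a + b) = u a + u b" using ulin aE bE unfolding lin_on_def by blast
          then show "w (a + b) = w a + w b"
            using abH a b unfolding wdef \<beta>_def by (simp add: padd)
        next
          fix t a assume a: "a \<in> H"
          have taH: "t *s a \<in> H" using a vec.subspace_scale[OF Hsub] by simp
          have aE: "a \<in> E" using a HE by auto
          have "u (t *s a) = t *s u a" using ulin aE unfolding lin_on_def by blast
          then show "w (t *s a) = t *s w a"
            using taH a unfolding wdef \<beta>_def by (simp add: pscale)
        qed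
        have wpow: "(w^^m) h = p ((u^^m) h)" if hH: "h \<in> H" for m h
        proof (induction m)
          case 0 then show ?case using ph[OF hH] by simp
        next
          case (Suc m)
          have umE: "(u^^m) h \<in> E" using pow_on_E[OF uE] hH HE by blast
          have "(w^^Suc m) h = w (p ((u^^m) h))" using Suc by simp
          also have "\<dots> = p (u (p ((u^^m) h)))" using pH[OF umE] unfolding wdef \<beta>_def by simp
          also have "u (p ((u^^m) h)) = u ((u^^m) h) - c ((u^^m) h) *s u x"
          proof -
            have "u ((u^^m) h) = u (p ((u^^m) h) + c ((u^^m) h) *s x)" by (rule arg_cong[OF decomp])
            also have "\<dots> = u (p ((u^^m) h)) + c ((u^^m) h) *s u x"
              using ulin pE[OF umE] xE vec.subspace_scale[OF E] unfolding lin_on_def by simp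
            finally show ?thesis by simp
          qed
          also have "\<dots> = (u^^Suc m) h" using ux by simp
          finally show ?case .
        qed
        have wnil: "\<exists>k. \<forall>v\<in>H. (w^^k) v = 0"
        proof -
          obtain k where k: "\<forall>v\<in>E. (u^^k) v = 0" using unil by blast
          have "\<forall>v\<in>H. (w^^k) v = 0" using wpow k HE by (auto simp: p_def c_def)
          then show ?thesis by blast
        qed
        have "\<forall>v. v \<notin> H \<longrightarrow> w v = 0" unfolding wdef \<beta>_def by simp
        then show "(\<forall>v. v \<notin> H \<longrightarrow> w v = 0) \<and> (\<forall>v\<in>H. w v \<in> H) \<and> lin_on H w \<and> (\<exists>k. \<forall>v\<in>H. (w^^k) v = 0)"
          using wH wlin wnil by blast
      qed
      have img2: "endo.dimle (\<beta> ` W) (d * (d - 1) div 2)"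
        by (rule Suc.IH[rule_format, OF Hsub dH bWsub]) (use hbW in blast)
      define Z where "Z = {u\<in>W. \<beta> u = 0}"
      define T where "T = vec.span {x}"
      define A where "A = vec.span (insert x Nx)"
      have Tsub: "vec.subspace T" unfolding T_def by simp
      have dT: "vec.dim T = 1" unfolding T_def using x0 by simp
      have Asub: "vec.subspace A" unfolding A_def by simp
      have "insert x Nx \<subseteq> E" using xE NxE by blast
      then have AE: "A \<subseteq> E" unfolding A_def by (rule vec.span_minimal[OF _ E])
      have xNx: "x \<notin> Nx"
      proof
        assume "x \<in> Nx"
        then have "x \<in> (\<lambda>u. u x) ` N" unfolding Nx_def .
        then obtain u where uN: "u \<in> N" and xu0: "x = u x" by (rule imageE)
        have xu: "u x = x" using xu0 by simp
        have "\<exists>k. \<forall>v\<in>E. (u^^k) v = 0" using hN uN by simp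
        then obtain k where k: "\<forall>v\<in>E. (u^^k) v = 0" by blast
        have "(u^^j) x = x" for j by (induction j) (auto simp: xu)
        moreover have "(u^^k) x = 0" using k xE by blast
        ultimately show False using x0 by simp
      qed
      have eNx: "vec.span Nx = Nx" by (rule vec.span_eq_iff[THEN iffD2, OF Nxsub])
      have "x \<notin> vec.span Nx" unfolding eNx by (rule xNx)
      then have dA: "vec.dim A = r + 1" unfolding A_def r_def vec.dim_span vec.dim_insert by simp
      have dAE: "vec.dim A \<le> vec.dim E" using AE by (rule vec.dim_subset)
      have Zsub: "endo.subspace Z"
        unfolding Z_def by (rule ee.linear_subspace_kernel_inter[OF linb Wsub])
      have hZ: "\<forall>u\<in>Z. (\<forall>v. v \<notin> E \<longrightarrow> u v = 0) \<and> lin_on E u \<and> (\<forall>v\<in>E. u v \<in> T) \<and> (\<forall>a\<in>A. u a = 0)"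
      proof
        fix u assume uZ: "u \<in> Z"
        then have uN: "u \<in> N" and ux: "u x = 0" and bu: "\<beta> u = 0" unfolding Z_def W_def by auto
        have uE: "\<forall>v\<in>E. u v \<in> E" and ulin: "lin_on E u" and out: "\<forall>v. v \<notin> E \<longrightarrow> u v = 0"
          using hN uN by auto
        have uT: "u v = c (u v) *s x" if vE: "v \<in> E" for v
        proof -
          have pv: "p v \<in> H" using pH vE by simp
          have "u v = u (p v + c v *s x)" by (rule arg_cong[OF decomp])
          also have "\<dots> = u (p v) + c v *s u x"
            using ulin pE[OF vE] xE vec.subspace_scale[OF E] unfolding lin_on_def by simp
          finally have uv: "u v = u (p v)" using ux by simp
          have "\<beta> u (p v) = 0" using bu by simp
          then have "p (u (p v)) = 0" using pv unfolding \<beta>_def by simp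
          then have "u (p v) = c (u (p v)) *s x" unfolding p_def by simp
          then show ?thesis using uv by simp
        qed
        have uTT: "\<forall>v\<in>E. u v \<in> T"
        proof
          fix v assume vE: "v \<in> E"
          have "x \<in> vec.span {x}" by (rule vec.span_base) simp
          then have "c (u v) *s x \<in> vec.span {x}" by (rule vec.span_scale)
          then show "u v \<in> T" using uT[OF vE] unfolding T_def by simp
        qed
        define \<phi> where "\<phi> v = c (u v)" for v
        have phil: "philin E \<phi>"
          unfolding philin_def \<phi>_def using ulin unfolding lin_on_def by (simp add: cadd cscale)
        have zA: "\<forall>a\<in>insert x Nx. u a = 0"
        proof
          fix a assume a: "a \<in> insert x Nx"
          show "u a = 0"
          proof (cases "a = x")
            case True then show ?thesis using ux by simp
          next
            case False
            then obtain w where wN: "w \<in> N" and aw: "a = w x" using a Nx_def by blast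
            have wE: "\<forall>v\<in>E. w v \<in> E" and wlin: "lin_on E w" and wnil: "\<exists>k. \<forall>v\<in>E. (w^^k) v = 0"
              using hN wN by auto
            have sN: "w + u \<in> N" by (rule endo.subspace_add[OF N wN uN])
            have snil: "\<exists>k. \<forall>v\<in>E. ((\<lambda>v. w v + u v)^^k) v = 0"
              using hN sN by (simp add: plus_fun_def)
            have zd: "\<forall>v\<in>E. u v = \<phi> v *s x" using uT \<phi>_def by simp
            have "\<phi> x = 0" using ux by (simp add: \<phi>_def c_def)
            have "\<phi> (w x) = 0"
              by (rule trace_lemma[OF E xE wE wlin wnil zd phil \<open>\<phi> x = 0\<close> snil])
            moreover have "w x \<in> E" using wE xE by blast
            ultimately show ?thesis using zd aw by simp
          qed
        qed
        have "\<forall>a\<in>A. u a = 0"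
        proof
          fix a assume "a \<in> A"
          then show "u a = 0" unfolding A_def
            by (rule lin_on_span_zero[OF E ulin _ zA, rotated]) (use xE NxE in auto)
        qed
        then show "(\<forall>v. v \<notin> E \<longrightarrow> u v = 0) \<and> lin_on E u \<and> (\<forall>v\<in>E. u v \<in> T) \<and> (\<forall>a\<in>A. u a = 0)"
          using out ulin uTT by blast
      qed
      have kerZ: "endo.dimle Z (vec.dim T * (vec.dim E - vec.dim A))"
        by (rule maps_bound[OF E Tsub, of "vec.dim E - vec.dim A", rule_format, OF Asub AE _ Zsub]) (use hZ in blast)+
      have ker2: "endo.dimle {u\<in>W. \<beta> u = 0} (vec.dim E - (r + 1))"
        using kerZ unfolding Z_def dT dA by simp
      have W2: "endo.dimle W (d * (d - 1) div 2 + (vec.dim E - (r + 1)))"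
        by (rule ee.rank_nullity_dimle[OF linb img2 ker2 Wsub])
      have N2: "endo.dimle N (r + (d * (d - 1) div 2 + (vec.dim E - (r + 1))))"
        by (rule ev.rank_nullity_dimle[OF ev_lin_app img1 W2[unfolded W_def] N])
      have ar: "r + (d * (d - 1) div 2 + (vec.dim E - (r + 1))) \<le> Suc d * (Suc d - 1) div 2"
      proof -
        have "r + 1 \<le> vec.dim E" using dA dAE by simp
        then have "r + (vec.dim E - (r + 1)) \<le> d" using dE by simp
        moreover have "d + d * (d - 1) div 2 = Suc d * (Suc d - 1) div 2" using tri_step2[of d] by simp
        ultimately show ?thesis by simp
      qed
      show ?thesis by (rule endo.dimle_mono[OF N2 ar])
    qed
  qed
qed



lemma tri_sum: "t * (t - 1) div 2 + t * (t + 1) div 2 = t * (t::nat)"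
proof (induction t)
  case 0 then show ?case by simp
next
  case (Suc t)
  have "Suc t * (Suc t - 1) div 2 + Suc t * (Suc t + 1) div 2
      = (t + t * (t - 1) div 2) + (Suc t + t * (t + 1) div 2)"
    using tri_step[of t] tri_step2[of t] by simp
  also have "\<dots> = t * t + 2 * t + 1" using Suc by simp
  also have "\<dots> = Suc t * Suc t" by (simp add: algebra_simps)
  finally show ?case .
qed

lemma tri_even: "2 * (t * (t - 1) div 2) = t * (t - 1::nat)"
proof -
  have "even (t * (t - 1))" by (cases t) auto
  then show ?thesis by simp
qed

lemma lin_on_endo: "is_endo u \<Longrightarrow> lin_on E u"
  unfolding lin_on_def using endo_add endo_scale_app by blast

lemma restr_pow:
  assumes inv: "\<forall>v\<in>K. u v \<in> K" and v: "v \<in> K"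
  shows "((\<lambda>w. if w \<in> K then u w else 0)^^m) v = (u^^m) v"
proof (induction m)
  case 0 then show ?case by simp
next
  case (Suc m)
  have "(u^^m) v \<in> K" using pow_on_E[OF inv v] .
  then show ?case using Suc by simp
qed

lemma main_bound:
  fixes b :: "'a::field^'n \<Rightarrow> 'a^'n \<Rightarrow> 'a"
  assumes char2: "(2::'a) = 0"
    and bil: "bilinear_form b" and sym: "symmetric_form b" and nondeg: "nondegenerate_form b"
    and ker_ts: "totally_singular b (KerQ b)"
    and VV: "endo.subspace VV" and VS: "VV \<subseteq> S_b b" and Vnil: "\<forall>u\<in>VV. nilpotent_endo u"
    and VA: "al \<longrightarrow> VV \<subseteq> A_b b"
  shows "endo.dimle VV (vec.dim (KerQ b) * (vec.dim (KerQ b) - 1) div 2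
            + vec.dim (KerQ b) * (vec.dim (orth b (KerQ b)) - vec.dim (KerQ b))
            + (if al then vec.dim (KerQ b) * (vec.dim (KerQ b) - 1) else vec.dim (KerQ b) * (vec.dim (KerQ b) + 1)) div 2)"
proof -
  define K where "K = KerQ b"
  define P where "P = orth b K"
  define Pp where "Pp = orth b P"
  define \<nu> where "\<nu> = vec.dim K"
  define D where "D = vec.dim P"
  have Ksub: "vec.subspace K" unfolding K_def by (rule kerQ_subspace[OF char2 bil sym])
  have Psub: "vec.subspace P" unfolding P_def by (rule orth_subspace[OF bil])
  have Ppsub: "vec.subspace Pp" unfolding Pp_def by (rule orth_subspace[OF bil])
  have KP: "K \<subseteq> P" unfolding K_def P_def by (rule ts_orth[OF ker_ts])
  have u1: "D + \<nu> \<le> CARD('n)" unfolding D_def \<nu>_def P_def by (rule orth_upper[OF bil nondeg Ksub])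
  have l1: "CARD('n) \<le> \<nu> + D" unfolding D_def \<nu>_def P_def by (rule orth_lower[OF bil Ksub])
  have u2: "vec.dim Pp + D \<le> CARD('n)" unfolding D_def Pp_def by (rule orth_upper[OF bil nondeg Psub])
  have dPp: "vec.dim Pp \<le> \<nu>" using u2 l1 by simp
  have str: "u v \<in> K" if "u \<in> VV" "v \<in> P" for u v
  proof -
    have "u \<in> S_b b" using VS that(1) by blast
    moreover have "nilpotent_endo u" using Vnil that(1) by blast
    ultimately show ?thesis unfolding K_def
      by (rule structural[OF bil sym _ _ that(2)[unfolded P_def K_def]])
  qed
  have endoV: "is_endo u" if "u \<in> VV" for u using VS that unfolding S_b_def by blast
  define f1 where "f1 u = (\<lambda>v. if v \<in> K then u v else 0)" for u :: "'a^'n \<Rightarrow> 'a^'n"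
  have linf1: "Vector_Spaces.linear endo_scale endo_scale f1"
    unfolding f1_def by (rule ee_lin_restr[where p="\<lambda>x. x"]) simp_all
  have f1sub: "endo.subspace (f1 ` VV)" by (rule ee.linear_subspace_image[OF linf1 VV])
  have hf1: "\<forall>w\<in>f1 ` VV. (\<forall>v. v \<notin> K \<longrightarrow> w v = 0) \<and> (\<forall>v\<in>K. w v \<in> K) \<and> lin_on K w \<and> (\<exists>k. \<forall>v\<in>K. (w^^k) v = 0)"
  proof
    fix w assume "w \<in> f1 ` VV"
    then obtain u where uV: "u \<in> VV" and wd: "w = f1 u" by blast
    have inv: "\<forall>v\<in>K. u v \<in> K" using str[OF uV] KP by blast
    have out: "\<forall>v. v \<notin> K \<longrightarrow> w v = 0" unfolding wd f1_def by simp
    have wK: "\<forall>v\<in>K. w v \<in> K" using inv unfolding wd f1_def by simp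
    have lin: "lin_on K w"
      unfolding lin_on_def wd f1_def
      using endo_add[OF endoV[OF uV]] endo_scale_app[OF endoV[OF uV]]
        vec.subspace_add[OF Ksub] vec.subspace_scale[OF Ksub] by simp
    obtain k where k: "(u^^k) = (\<lambda>_. 0)" using Vnil uV unfolding nilpotent_endo_def by blast
    have "\<forall>v\<in>K. (w^^k) v = 0" using restr_pow[OF inv] k unfolding wd f1_def by simp
    then show "(\<forall>v. v \<notin> K \<longrightarrow> w v = 0) \<and> (\<forall>v\<in>K. w v \<in> K) \<and> lin_on K w \<and> (\<exists>k. \<forall>v\<in>K. (w^^k) v = 0)"
      using out wK lin by blast
  qed
  have img1: "endo.dimle (f1 ` VV) (\<nu> * (\<nu> - 1) div 2)"
    by (rule gerst[rule_format, OF Ksub _ f1sub]) (use hf1 \<nu>_def in auto)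
  define V0 where "V0 = {u\<in>VV. f1 u = 0}"
  have V0sub: "endo.subspace V0" unfolding V0_def by (rule ee.linear_subspace_kernel_inter[OF linf1 VV])
  have V0K: "u k = 0" if "u \<in> V0" "k \<in> K" for u k
  proof -
    have "f1 u k = 0" using that V0_def by simp
    then show ?thesis using that(2) unfolding f1_def by simp
  qed
  define f2 where "f2 u = (\<lambda>v. if v \<in> P then u v else 0)" for u :: "'a^'n \<Rightarrow> 'a^'n"
  have linf2: "Vector_Spaces.linear endo_scale endo_scale f2"
    unfolding f2_def by (rule ee_lin_restr[where p="\<lambda>x. x"]) simp_all
  have f2sub: "endo.subspace (f2 ` V0)" by (rule ee.linear_subspace_image[OF linf2 V0sub])
  have hf2: "\<forall>w\<in>f2 ` V0. (\<forall>v. v \<notin> P \<longrightarrow> w v = 0) \<and> lin_on P w \<and> (\<forall>v\<in>P. w v \<in> K) \<and> (\<forall>a\<in>K. w a = 0)"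
  proof
    fix w assume "w \<in> f2 ` V0"
    then obtain u where uV0: "u \<in> V0" and wd: "w = f2 u" by blast
    have uV: "u \<in> VV" using uV0 V0_def by simp
    have out: "\<forall>v. v \<notin> P \<longrightarrow> w v = 0" unfolding wd f2_def by simp
    have wK: "\<forall>v\<in>P. w v \<in> K" using str[OF uV] unfolding wd f2_def by simp
    have lin: "lin_on P w"
      unfolding lin_on_def wd f2_def
      using endo_add[OF endoV[OF uV]] endo_scale_app[OF endoV[OF uV]]
        vec.subspace_add[OF Psub] vec.subspace_scale[OF Psub] by simp
    have z: "\<forall>a\<in>K. w a = 0" using V0K[OF uV0] KP unfolding wd f2_def by auto
    show "(\<forall>v. v \<notin> P \<longrightarrow> w v = 0) \<and> lin_on P w \<and> (\<forall>v\<in>P. w v \<in> K) \<and> (\<forall>a\<in>K. w a = 0)"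
      using out lin wK z by blast
  qed
  have img2: "endo.dimle (f2 ` V0) (\<nu> * (D - \<nu>))"
    unfolding \<nu>_def D_def
    by (rule maps_bound[OF Psub Ksub, of "vec.dim P - vec.dim K", rule_format, OF Ksub KP _ f2sub])
      (use hf2 in blast)+
  define V1 where "V1 = {u\<in>V0. f2 u = 0}"
  have V1sub: "endo.subspace V1" unfolding V1_def by (rule ee.linear_subspace_kernel_inter[OF linf2 V0sub])
  have hV1: "\<forall>u\<in>V1. (\<forall>x y. b (u x) y = b x (u y)) \<and> (\<forall>v. u v \<in> Pp) \<and> (al \<longrightarrow> (\<forall>x. b x (u x) = 0))"
  proof
    fix u assume uV1: "u \<in> V1"
    have uV: "u \<in> VV" and uP: "\<forall>p\<in>P. u p = 0"
    proof -
      show "u \<in> VV" using uV1 V1_def V0_def by simp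
      have "f2 u = 0" using uV1 V1_def by simp
      then show "\<forall>p\<in>P. u p = 0" unfolding f2_def by (metis (mono_tags) zero_fun_def)
    qed
    have uS: "u \<in> S_b b" using VS uV by blast
    have adj: "\<forall>x y. b (u x) y = b x (u y)" using Sb_adj[OF sym uS] by blast
    have "\<forall>v. u v \<in> Pp"
    proof
      fix v
      have "\<forall>p\<in>P. b (u v) p = 0"
      proof
        fix p assume "p \<in> P"
        have "b (u v) p = b v (u p)" using adj by blast
        also have "\<dots> = 0" using uP \<open>p \<in> P\<close> bil_zero2[OF bil] by simp
        finally show "b (u v) p = 0" .
      qed
      then show "u v \<in> Pp" unfolding Pp_def orth_def by blast
    qed
    moreover have "al \<longrightarrow> (\<forall>x. b x (u x) = 0)" using VA uV unfolding A_b_def by blast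
    ultimately show "(\<forall>x y. b (u x) y = b x (u y)) \<and> (\<forall>v. u v \<in> Pp) \<and> (al \<longrightarrow> (\<forall>x. b x (u x) = 0))"
      using adj by blast
  qed
  have ker3: "endo.dimle V1 ((if al then \<nu> * (\<nu> - 1) else \<nu> * (\<nu> + 1)) div 2)"
    by (rule sym_bound[OF bil sym nondeg, of \<nu> al, rule_format, OF Ppsub dPp V1sub]) (use hV1 in blast)
  have V0b: "endo.dimle V0 (\<nu> * (D - \<nu>) + (if al then \<nu> * (\<nu> - 1) else \<nu> * (\<nu> + 1)) div 2)"
    by (rule ee.rank_nullity_dimle[OF linf2 img2 ker3[unfolded V1_def] V0sub])
  have Vb: "endo.dimle VV (\<nu> * (\<nu> - 1) div 2 + (\<nu> * (D - \<nu>) + (if al then \<nu> * (\<nu> - 1) else \<nu> * (\<nu> + 1)) div 2))"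
    by (rule ee.rank_nullity_dimle[OF linf1 img1 V0b[unfolded V0_def] VV])
  then show ?thesis unfolding K_def[symmetric] P_def[symmetric] \<nu>_def[symmetric] D_def[symmetric]
    by (simp add: add.assoc)
qed



theorem proposition5p2:
  fixes b :: "'a::field^'n \<Rightarrow> 'a^'n \<Rightarrow> 'a"
  assumes char2: "(2::'a) = 0"
    and bil: "bilinear_form b" and sym: "symmetric_form b" and nondeg: "nondegenerate_form b"
    and ker_ts: "totally_singular b (KerQ b)"
  shows "(\<forall>\<V>. module.subspace endo_scale \<V> \<and> \<V> \<subseteq> S_b b \<and> (\<forall>u\<in>\<V>. nilpotent_endo u) \<longrightarrow>
            int (vector_space.dim endo_scale \<V>)
              \<le> int (vec.dim (KerQ b)) * (int CARD('n) - int (vec.dim (KerQ b))))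
       \<and> (\<forall>\<V>. module.subspace endo_scale \<V> \<and> \<V> \<subseteq> A_b b \<and> (\<forall>u\<in>\<V>. nilpotent_endo u) \<longrightarrow>
            int (vector_space.dim endo_scale \<V>)
              \<le> int (vec.dim (KerQ b)) * (int CARD('n) - int (vec.dim (KerQ b)) - 1))"
proof -
  define \<nu> where "\<nu> = vec.dim (KerQ b)"
  define D where "D = vec.dim (orth b (KerQ b))"
  have Ksub: "vec.subspace (KerQ b)" by (rule kerQ_subspace[OF char2 bil sym])
  have u1: "D + \<nu> \<le> CARD('n)" unfolding D_def \<nu>_def by (rule orth_upper[OF bil nondeg Ksub])
  have l1: "CARD('n) \<le> \<nu> + D" unfolding D_def \<nu>_def by (rule orth_lower[OF bil Ksub])
  have nD: "CARD('n) = \<nu> + D" using u1 l1 by simp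
  have "KerQ b \<subseteq> orth b (KerQ b)" by (rule ts_orth[OF ker_ts])
  then have "\<nu> \<le> D" unfolding \<nu>_def D_def by (rule vec.dim_subset)
  then obtain e where De: "D = \<nu> + e" using le_Suc_ex by blast
  have De': "D - \<nu> = e" using De by simp
  have cardn: "int CARD('n) = 2 * int \<nu> + int e" using nD De by simp
  show ?thesis
  proof (intro conjI allI impI)
    fix VV :: "('a^'n \<Rightarrow> 'a^'n) set"
    assume h: "module.subspace endo_scale VV \<and> VV \<subseteq> S_b b \<and> (\<forall>u\<in>VV. nilpotent_endo u)"
    have "endo.dimle VV (\<nu> * (\<nu> - 1) div 2 + \<nu> * (D - \<nu>) + (if False then \<nu> * (\<nu> - 1) else \<nu> * (\<nu> + 1)) div 2)"
      unfolding \<nu>_def D_def by (rule main_bound[OF char2 bil sym nondeg ker_ts]) (use h in auto)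
    then have "vector_space.dim endo_scale VV \<le> \<nu> * (\<nu> - 1) div 2 + \<nu> * e + \<nu> * (\<nu> + 1) div 2"
      using endo.dimle_dim De' by fastforce
    also have "\<dots> = \<nu> * \<nu> + \<nu> * e" using tri_sum[of \<nu>] by simp
    finally have "int (vector_space.dim endo_scale VV) \<le> int (\<nu> * \<nu> + \<nu> * e)" by (rule of_nat_mono)
    also have "\<dots> = int \<nu> * (int CARD('n) - int \<nu>)" using cardn by (simp add: algebra_simps)
    finally show "int (vector_space.dim endo_scale VV) \<le> int (vec.dim (KerQ b)) * (int CARD('n) - int (vec.dim (KerQ b)))"
      unfolding \<nu>_def .
  next
    fix VV :: "('a^'n \<Rightarrow> 'a^'n) set"
    assume h: "module.subspace endo_scale VV \<and> VV \<subseteq> A_b b \<and> (\<forall>u\<in>VV. nilpotent_endo u)"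
    have VS: "VV \<subseteq> S_b b" using h Ab_Sb[OF char2 bil] by blast
    have "endo.dimle VV (\<nu> * (\<nu> - 1) div 2 + \<nu> * (D - \<nu>) + (if True then \<nu> * (\<nu> - 1) else \<nu> * (\<nu> + 1)) div 2)"
      unfolding \<nu>_def D_def by (rule main_bound[OF char2 bil sym nondeg ker_ts]) (use h VS in auto)
    then have "vector_space.dim endo_scale VV \<le> \<nu> * (\<nu> - 1) div 2 + \<nu> * e + \<nu> * (\<nu> - 1) div 2"
      using endo.dimle_dim De' by fastforce
    also have "\<dots> = \<nu> * (\<nu> - 1) + \<nu> * e" using tri_even[of \<nu>] by simp
    finally have le: "int (vector_space.dim endo_scale VV) \<le> int (\<nu> * (\<nu> - 1) + \<nu> * e)" by (rule of_nat_mono)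
    have "int (\<nu> * (\<nu> - 1) + \<nu> * e) = int \<nu> * (int CARD('n) - int \<nu> - 1)"
    proof (cases "\<nu> = 0")
      case True then show ?thesis by simp
    next
      case False
      then have n1: "int (\<nu> - 1) = int \<nu> - 1" by simp
      have "int (\<nu> * (\<nu> - 1) + \<nu> * e) = int \<nu> * int (\<nu> - 1) + int \<nu> * int e"
        by (simp only: of_nat_add of_nat_mult)
      also have "\<dots> = int \<nu> * (int \<nu> - 1) + int \<nu> * int e" by (simp only: n1)
      also have "\<dots> = int \<nu> * (int CARD('n) - int \<nu> - 1)" using cardn by (simp add: algebra_simps)
      finally show ?thesis .
    qed
    then show "int (vector_space.dim endo_scale VV) \<le> int (vec.dim (KerQ b)) * (int CARD('n) - int (vec.dim (KerQ b)) - 1)"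
      using le unfolding \<nu>_def by simp
  qed
qed


end
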